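(* Let $n\ge 2$ and $d\ge1$ be integers and consider the test $\mathcal{T}_d$ described below. For every $i\in[n]$, the polynomial $f(x)=x_i-x_{n+i}^d$ on $\mathbb{R}^{2n}$ passes $\mathcal{T}_d$ with probability at least $1-\beta$, where $\beta=1/\log n$.
   Context: The test $\mathcal{T}_d$ takes as input a degree-$d$ real polynomial $f:\mathbb{R}^{2n}\to\mathbb{R}$. Set $\beta:=1/\log n$ and $\delta:=2^{-n^2}$. Generate $n$ i.i.d. bits $a_i\in\{0,1\}$ with $\Pr[a_i=1]=\beta$, $2n$ i.i.d. standard Gaussians $h_1,\dots,h_n,g_1,\dots,g_n\sim N(0,1)$, and a uniformly random $b\in\{-1,1\}$, all independent. Set $y\in\mathbb{R}^{2n}$ by $y_i=a_ih_i+g_i^d+b\delta$ and $y_{n+i}=g_i$ for $i\in[n]$. The test accepts (f passes) iff $\mathrm{sign}(f(y))=b$. *)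

theory Defs
  imports "HOL-Probability.Probability"
begin

definition test_beta :: "nat \<Rightarrow> real" where
  "test_beta n = 1 / log 2 (real n)"

definition test_delta :: "nat \<Rightarrow> real" where
  "test_delta n = 1 / 2 ^ (n^2)"

definition std_gauss :: "real measure" where
  "std_gauss = density lborel std_normal_density"

text \<open>Sample space: bits a_0..a_{n-1}, Gaussians h_0..h_{n-1}, g_0..g_{n-1}, sign b.
  Indices are 0-based: i ranges over {0..<n}, coordinates of y over {0..<2n}.\<close>
definition test_space :: "nat \<Rightarrow> ((nat \<Rightarrow> bool) \<times> (nat \<Rightarrow> real) \<times> (nat \<Rightarrow> real) \<times> real) measure" where
  "test_space n =
     (PiM {..<n} (\<lambda>_. measure_pmf (bernoulli_pmf (test_beta n)))) \<Otimes>\<^sub>M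
     ((PiM {..<n} (\<lambda>_. std_gauss)) \<Otimes>\<^sub>M
     ((PiM {..<n} (\<lambda>_. std_gauss)) \<Otimes>\<^sub>M
      measure_pmf (pmf_of_set {-1, 1::real})))"

definition test_point :: "nat \<Rightarrow> nat \<Rightarrow> (nat \<Rightarrow> bool) \<Rightarrow> (nat \<Rightarrow> real) \<Rightarrow> (nat \<Rightarrow> real) \<Rightarrow> real \<Rightarrow> (nat \<Rightarrow> real)" where
  "test_point n d a h g b = (\<lambda>j.
     if j < n then (if a j then h j else 0) + g j ^ d + b * test_delta n
     else if j < 2 * n then g (j - n) else 0)"

definition pass_prob :: "nat \<Rightarrow> nat \<Rightarrow> ((nat \<Rightarrow> real) \<Rightarrow> real) \<Rightarrow> real" where
  "pass_prob n d f = measure (test_space n)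
     {(a, h, g, b) \<in> space (test_space n). sgn (f (test_point n d a h g b)) = b}"

end

theory Submission
  imports Defs
begin

lemma gauss_prob: "prob_space std_gauss"
  unfolding std_gauss_def by (rule prob_space_normal_density) simp

theorem mainTheorem3:
  fixes n d i :: nat
  assumes "n \<ge> 2" and "d \<ge> 1" and "i < n"
  shows "pass_prob n d (\<lambda>y. y i - y (n + i) ^ d) \<ge> 1 - test_beta n"
proof -
  define \<beta> where "\<beta> = test_beta n"
  have lg: "log 2 (real n) \<ge> 1" using assms(1) by simp
  have b0: "0 \<le> \<beta>" "\<beta> \<le> 1" unfolding \<beta>_def test_beta_def using lg by auto
  define P1 where "P1 = PiM {..<n} (\<lambda>_. measure_pmf (bernoulli_pmf (test_beta n)))"
  define R where "R = (PiM {..<n} (\<lambda>_. std_gauss)) \<Otimes>\<^sub>M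
     ((PiM {..<n} (\<lambda>_. std_gauss)) \<Otimes>\<^sub>M
      measure_pmf (pmf_of_set {-1, 1::real}))"
  have TS: "test_space n = P1 \<Otimes>\<^sub>M R" unfolding test_space_def P1_def R_def by simp
  interpret G: prob_space std_gauss by (rule gauss_prob)
  interpret PG: product_prob_space "\<lambda>_. std_gauss" "{..<n}" by unfold_locales
  interpret P1p: product_prob_space "\<lambda>_. measure_pmf (bernoulli_pmf (test_beta n))" "{..<n}"
    by unfold_locales
  interpret Rp: prob_space R unfolding R_def
    by (intro prob_space_pair prob_space_PiM gauss_prob prob_space_measure_pmf)
  interpret P1s: prob_space P1 unfolding P1_def by (intro prob_space_PiM prob_space_measure_pmf)
  interpret T: prob_space "P1 \<Otimes>\<^sub>M R" by (intro prob_space_pair) unfold_locales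
  define A where "A = {a \<in> space P1. a i \<in> {False}}"
  have "A = (\<lambda>a. a i) -` {False} \<inter> space P1" unfolding A_def by auto
  then have Asets: "A \<in> sets P1" unfolding P1_def
    by (simp only:) (rule measurable_sets[OF measurable_component_singleton], use assms(3) in auto)
  have eA: "emeasure P1 A = ennreal (1 - \<beta>)"
    unfolding A_def P1_def
    by (subst P1p.emeasure_PiM_Collect_single)
       (use assms(3) b0 in \<open>auto simp: emeasure_pmf_single \<beta>_def\<close>)
  define GP where "GP = PiM {..<n} (\<lambda>_. std_gauss)"
  define U where "U = measure_pmf (pmf_of_set {-1, 1::real})"
  interpret GPp: prob_space GP unfolding GP_def by (intro prob_space_PiM gauss_prob)
  interpret Up: prob_space U unfolding U_def by (rule prob_space_measure_pmf)
  interpret GUp: prob_space "GP \<Otimes>\<^sub>M U" by (intro prob_space_pair) unfold_locales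
  have RR: "R = GP \<Otimes>\<^sub>M (GP \<Otimes>\<^sub>M U)" unfolding R_def GP_def U_def by simp
  have sU: "sets U = UNIV" unfolding U_def by simp
  define Bs where "Bs = {-1, 1::real}"
  have eU: "emeasure U Bs = 1" unfolding U_def Bs_def
    by (rule emeasure_pmf_of_set_space) auto
  have e2: "emeasure (GP \<Otimes>\<^sub>M U) (space GP \<times> Bs) = 1"
    by (subst Up.emeasure_pair_measure_Times) (auto simp: eU GPp.emeasure_space_1 sU)
  have e3: "emeasure R (space GP \<times> (space GP \<times> Bs)) = 1" unfolding RR
    by (subst GUp.emeasure_pair_measure_Times) (auto simp: e2 GPp.emeasure_space_1 sU)
  have Rsets: "space GP \<times> (space GP \<times> Bs) \<in> sets R" unfolding RR
    by (auto simp: sU)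
  have eS: "emeasure (P1 \<Otimes>\<^sub>M R) (A \<times> (space GP \<times> (space GP \<times> Bs))) = ennreal (1 - \<beta>)"
    using Asets eA Rsets by (simp add: Rp.emeasure_pair_measure_Times e3)
  define Ev where "Ev = {(a, h, g, b) \<in> space (test_space n).
      sgn ((\<lambda>y. y i - y (n + i) ^ d) (test_point n d a h g b)) = b}"
  have Ev_eq: "Ev = {x \<in> space (P1 \<Otimes>\<^sub>M R). sgn ((if fst x i then fst (snd x) i else 0)
       + snd (snd (snd x)) * test_delta n) = snd (snd (snd x))}"
    unfolding Ev_def TS using assms(3) by (auto simp: test_point_def)
  have Ev_m: "Ev \<in> sets (P1 \<Otimes>\<^sub>M R)"
    unfolding Ev_eq
  proof (rule measurable_equality_set)
    have mb0: "(\<lambda>x. snd (snd (snd x))) \<in> (P1 \<Otimes>\<^sub>M R) \<rightarrow>\<^sub>M count_space UNIV"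
      unfolding R_def P1_def by measurable
    have cb: "(\<lambda>b::real. b) \<in> count_space UNIV \<rightarrow>\<^sub>M borel" by simp
    show mb: "(\<lambda>x. snd (snd (snd x))) \<in> borel_measurable (P1 \<Otimes>\<^sub>M R)"
      using measurable_compose[OF mb0 cb] by simp
    have sg: "sets std_gauss = sets borel" unfolding std_gauss_def by simp
    have mh: "(\<lambda>x. fst (snd x) i) \<in> borel_measurable (P1 \<Otimes>\<^sub>M R)"
    proof -
      have "(\<lambda>x. fst (snd x) i) \<in> (P1 \<Otimes>\<^sub>M R) \<rightarrow>\<^sub>M std_gauss"
        unfolding R_def P1_def using assms(3) by (measurable; simp)
      then show ?thesis using measurable_cong_sets[OF refl sg] by blast
    qed
    have ma: "Measurable.pred (P1 \<Otimes>\<^sub>M R) (\<lambda>x. fst x i)"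
      unfolding R_def P1_def using assms(3) by (measurable; simp)
    have "(\<lambda>x. (if fst x i then fst (snd x) i else 0)
       + snd (snd (snd x)) * test_delta n) \<in> borel_measurable (P1 \<Otimes>\<^sub>M R)"
      using mh mb ma by measurable
    then show "(\<lambda>x. sgn ((if fst x i then fst (snd x) i else 0)
       + snd (snd (snd x)) * test_delta n)) \<in> borel_measurable (P1 \<Otimes>\<^sub>M R)"
      by measurable
  qed
  have sub: "A \<times> (space GP \<times> (space GP \<times> Bs)) \<subseteq> Ev"
  proof
    fix x assume x: "x \<in> A \<times> (space GP \<times> (space GP \<times> Bs))"
    obtain a h g b where xe: "x = (a, h, g, b)" by (cases x) auto
    have "b \<in> {-1, 1}" using x xe unfolding Bs_def by auto
    then have "sgn (b * test_delta n) = b"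
      by (auto simp: test_delta_def sgn_mult)
    then show "x \<in> Ev" using x xe unfolding Ev_eq A_def
      by (auto simp: space_pair_measure RR U_def)
  qed
  have "1 - \<beta> = measure (P1 \<Otimes>\<^sub>M R) (A \<times> (space GP \<times> (space GP \<times> Bs)))"
    using eS b0 by (simp add: measure_def)
  also have "\<dots> \<le> measure (P1 \<Otimes>\<^sub>M R) Ev"
    by (rule T.finite_measure_mono[OF sub Ev_m])
  finally show ?thesis unfolding pass_prob_def \<beta>_def TS[symmetric] Ev_def .
qed

end
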